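(* Let $A$ and $I$ be finite sets. In the group $\langle\mathcal P^\times(I)\rangle^{\otimes A}$ one has $$\bigotimes_{a\in A}\sum_{J\in\mathcal P^\times(I)}(-1)^{|I|-1-|J|}\langle J\rangle-\sum_{J\in\mathcal P^\times(I)}(-1)^{|I|-1-|J|}\bigotimes_{a\in A}\langle J\rangle=\sum_{k\in\mathcal R'(A,I)}\ \bigotimes_{a\in A}\ \sum_{J\in\mathcal P(k(a))}(-1)^{|k(a)|-|J|}\langle J\rangle.$$
   Context: $\mathcal P(I)$ is the set of subsets of $I$ and $\mathcal P^\times(I)=\mathcal P(I)\setminus\{I\}$; $\langle\mathcal P^\times(I)\rangle$ is the free abelian group with basis $\{\langle J\rangle: J\in\mathcal P^\times(I)\}$, and $\langle\mathcal P^\times(I)\rangle^{\otimes A}$ is the tensor product over $\mathbb Z$ of copies indexed by $A$. $\mathcal R'(A,I)$ is the set of functions $k\colon A\to\mathcal P^\times(I)$ with $\bigcup_{a\in A}k(a)=I$. *)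

theory Defs
  imports Main "HOL-Library.FuncSet" "HOL-Library.Function_Algebras"
begin

definition Ptimes :: "'i set \<Rightarrow> 'i set set" where
  "Ptimes I = Pow I - {I}"

(* Elements of the free abelian group <P^x(I)> are represented by their
   integer coefficient functions 'i set => int (supported on P^x(I));
   the basis element <J> is the indicator of J. *)
definition gen :: "'i set \<Rightarrow> ('i set \<Rightarrow> int)" where
  "gen J = (\<lambda>X. if X = J then 1 else 0)"

definition smult :: "int \<Rightarrow> ('b \<Rightarrow> int) \<Rightarrow> ('b \<Rightarrow> int)" where
  "smult c f = (\<lambda>x. c * f x)"

(* <P^x(I)>^{\<otimes>A} is free abelian with basis the pure tensors
   \<otimes>_a <k(a)>, k : A -> P^x(I).  Elements are represented by coefficient
   functions on (extensional) maps k \<in> A \<rightarrow>\<^sub>E P^x(I).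
   tensor A I v is the (multilinear) pure tensor \<otimes>_{a\<in>A} v(a). *)
definition tensor :: "'a set \<Rightarrow> 'i set \<Rightarrow> ('a \<Rightarrow> 'i set \<Rightarrow> int) \<Rightarrow> (('a \<Rightarrow> 'i set) \<Rightarrow> int)" where
  "tensor A I v = (\<lambda>k. if k \<in> A \<rightarrow>\<^sub>E Ptimes I then (\<Prod>a\<in>A. v a (k a)) else 0)"

definition Rprime :: "'a set \<Rightarrow> 'i set \<Rightarrow> ('a \<Rightarrow> 'i set) set" where
  "Rprime A I = {k \<in> A \<rightarrow>\<^sub>E Ptimes I. (\<Union>a\<in>A. k a) = I}"

end

theory Submission
  imports Defs
begin

lemma sum_app: "(\<Sum>x\<in>S. f x) y = (\<Sum>x\<in>S. f x y :: 'c::comm_monoid_add)"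
  by (induction S rule: infinite_finite_induct) auto

lemma prod_ind: "finite A \<Longrightarrow> (\<Prod>a\<in>A. if P a then 1 else 0 :: int) = (if \<forall>a\<in>A. P a then 1 else 0)"
  by (induction A rule: finite_induct) auto

lemma alt_pow: "finite Z \<Longrightarrow> (\<Sum>T\<in>Pow Z. (-1::int)^card T) = (if Z={} then 1 else 0)"
proof (induction Z rule: finite_induct)
  case empty thus ?case by simp
next
  case (insert x Z)
  have inj: "inj_on (insert x) (Pow Z)" using insert(2) by (auto simp: inj_on_def)
  have d: "Pow Z \<inter> insert x ` Pow Z = {}" using insert(2) by auto
  have "(\<Sum>T\<in>Pow (insert x Z). (-1::int)^card T)
      = (\<Sum>T\<in>Pow Z. (-1::int)^card T) + (\<Sum>T\<in>insert x ` Pow Z. (-1::int)^card T)"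
    unfolding Pow_insert using insert(1) d by (intro sum.union_disjoint) auto
  also have "(\<Sum>T\<in>insert x ` Pow Z. (-1::int)^card T) = (\<Sum>T\<in>Pow Z. (-1::int)^card (insert x T))"
    using inj by (simp add: sum.reindex)
  also have "\<dots> = (\<Sum>T\<in>Pow Z. - ((-1::int)^card T))"
    using insert(1,2) by (intro sum.cong) (auto simp: finite_subset card_insert_if)
  finally show ?case by (simp add: sum_negf)
qed

lemma alt_int: assumes "finite Y"
  shows "(\<Sum>K\<in>Pow Y. if X \<subseteq> K then (-1::int)^(card K - card X) else 0) = (if X = Y then 1 else 0)"
proof (cases "X \<subseteq> Y")
  case False
  then show ?thesis by (intro trans[OF sum.neutral]) auto
next
  case True
  have fX: "finite X" using True assms finite_subset by blast
  have "(\<Sum>K\<in>Pow Y. if X \<subseteq> K then (-1::int)^(card K - card X) else 0)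
      = (\<Sum>K\<in>{K\<in>Pow Y. X \<subseteq> K}. (-1::int)^(card K - card X))"
    using assms by (intro sum.inter_filter[symmetric]) simp
  also have "{K\<in>Pow Y. X \<subseteq> K} = (\<lambda>T. X \<union> T) ` Pow (Y - X)" using True by auto
  also have "(\<Sum>K\<in>(\<lambda>T. X \<union> T) ` Pow (Y - X). (-1::int)^(card K - card X))
      = (\<Sum>T\<in>Pow (Y - X). (-1::int)^(card (X \<union> T) - card X))"
    by (subst sum.reindex) (auto simp: inj_on_def)
  also have "\<dots> = (\<Sum>T\<in>Pow (Y - X). (-1::int)^card T)"
  proof (intro sum.cong refl)
    fix T assume "T \<in> Pow (Y - X)"
    then have "T \<subseteq> Y - X" by simp
    then have "card (X \<union> T) = card X + card T" using fX assms
      by (intro card_Un_disjoint) (auto intro: finite_subset)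
    then show "(-1::int)^(card (X \<union> T) - card X) = (-1)^card T" by simp
  qed
  also have "\<dots> = (if X = Y then 1 else 0)" using alt_pow[of "Y - X"] assms True by auto
  finally show ?thesis .
qed

lemma dsum: "finite S \<Longrightarrow> (\<Sum>J\<in>S. c J * (if x = J then 1 else 0 :: int)) = (if x \<in> S then c x else 0)"
proof -
  assume fS: "finite S"
  have "(\<Sum>J\<in>S. c J * (if x = J then 1 else 0 :: int)) = (\<Sum>J\<in>S. if x = J then c J else 0)"
    by (rule sum.cong) auto
  also have "\<dots> = (if x \<in> S then c x else 0)" using fS by simp
  finally show ?thesis .
qed

lemma cover_ind:
  assumes fI: "finite I" and sub: "\<And>a. a \<in> A \<Longrightarrow> k a \<subseteq> I"
  shows "(if (\<Union>a\<in>A. k a) = I then 1 else 0 :: int)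
       = (\<Sum>S\<in>Pow I. (-1)^card S * (if \<forall>a\<in>A. k a \<inter> S = {} then 1 else 0))"
proof -
  define N where "N = I - (\<Union>a\<in>A. k a)"
  have NI: "N \<subseteq> I" unfolding N_def by auto
  have "(\<Sum>S\<in>Pow I. (-1::int)^card S * (if \<forall>a\<in>A. k a \<inter> S = {} then 1 else 0))
      = (\<Sum>S\<in>Pow I. if S \<subseteq> N then (-1::int)^card S else 0)"
    by (intro sum.cong refl) (auto simp: N_def)
  also have "\<dots> = (\<Sum>S\<in>{S\<in>Pow I. S \<subseteq> N}. (-1::int)^card S)"
    using fI by (intro sum.inter_filter[symmetric]) simp
  also have "{S\<in>Pow I. S \<subseteq> N} = Pow N" using NI by auto
  also have "(\<Sum>S\<in>Pow N. (-1::int)^card S) = (if N = {} then 1 else 0)"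
    using NI fI by (intro alt_pow) (auto intro: finite_subset)
  also have "(N = {}) = ((\<Union>a\<in>A. k a) = I)" using sub unfolding N_def by auto
  finally show ?thesis by simp
qed

theorem lemma15p2:
  fixes A :: "'a set" and I :: "'i set"
  assumes "finite A" and "finite I"
  shows "tensor A I (\<lambda>a. \<Sum>J\<in>Ptimes I. smult ((-1) ^ (card I - 1 - card J)) (gen J))
           - (\<Sum>J\<in>Ptimes I. smult ((-1) ^ (card I - 1 - card J)) (tensor A I (\<lambda>a. gen J)))
         = (\<Sum>k\<in>Rprime A I. tensor A I (\<lambda>a. \<Sum>J\<in>Pow (k a). smult ((-1) ^ (card (k a) - card J)) (gen J)))"
proof (rule ext)
  fix m :: "'a \<Rightarrow> 'i set"
  note fA = assms(1) and fI = assms(2)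
  define c where "c J = (-1::int)^(card I - 1 - card J)" for J :: "'i set"
  define W where "W X K = (if X \<subseteq> K then (-1::int)^(card K - card X) else 0)" for X K :: "'i set"
  define Pt where "Pt = Ptimes I"
  have fPt: "finite Pt" unfolding Pt_def Ptimes_def using fI by simp
  show "(tensor A I (\<lambda>a. \<Sum>J\<in>Ptimes I. smult ((-1) ^ (card I - 1 - card J)) (gen J))
           - (\<Sum>J\<in>Ptimes I. smult ((-1) ^ (card I - 1 - card J)) (tensor A I (\<lambda>a. gen J)))) m
         = (\<Sum>k\<in>Rprime A I. tensor A I (\<lambda>a. \<Sum>J\<in>Pow (k a). smult ((-1) ^ (card (k a) - card J)) (gen J))) m"
  proof (cases "m \<in> A \<rightarrow>\<^sub>E Ptimes I")
    case False
    then show ?thesis by (simp add: tensor_def sum_app smult_def)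
  next
    case True
    have mPt: "a \<in> A \<Longrightarrow> m a \<in> Pt" for a using True unfolding Pt_def by auto
    have mI: "a \<in> A \<Longrightarrow> m a \<subset> I" for a using mPt unfolding Pt_def Ptimes_def by auto
    have inner1: "(\<Sum>J\<in>Pt. c J * gen J (m a)) = c (m a)" if "a \<in> A" for a
      using mPt[OF that] fPt by (simp add: gen_def dsum)
    have LHS: "(tensor A I (\<lambda>a. \<Sum>J\<in>Ptimes I. smult ((-1) ^ (card I - 1 - card J)) (gen J))
           - (\<Sum>J\<in>Ptimes I. smult ((-1) ^ (card I - 1 - card J)) (tensor A I (\<lambda>a. gen J)))) m
         = (\<Prod>a\<in>A. c (m a)) - (\<Sum>J\<in>Pt. c J * (if \<forall>a\<in>A. m a = J then 1 else 0))"
    proof -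
      have "tensor A I (\<lambda>a. \<Sum>J\<in>Ptimes I. smult ((-1) ^ (card I - 1 - card J)) (gen J)) m
          = (\<Prod>a\<in>A. \<Sum>J\<in>Pt. c J * gen J (m a))"
        using True by (simp add: tensor_def sum_app smult_def c_def Pt_def)
      also have "\<dots> = (\<Prod>a\<in>A. c (m a))" using inner1 by (intro prod.cong) auto
      finally have 1: "tensor A I (\<lambda>a. \<Sum>J\<in>Ptimes I. smult ((-1) ^ (card I - 1 - card J)) (gen J)) m = (\<Prod>a\<in>A. c (m a))" .
      have 2: "(\<Sum>J\<in>Ptimes I. smult ((-1) ^ (card I - 1 - card J)) (tensor A I (\<lambda>a. gen J))) m
          = (\<Sum>J\<in>Pt. c J * (if \<forall>a\<in>A. m a = J then 1 else 0))"
        using True fA by (simp add: tensor_def sum_app smult_def c_def Pt_def gen_def prod_ind)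
      show ?thesis using 1 2 by simp
    qed
    have Tk: "tensor A I (\<lambda>a. \<Sum>J\<in>Pow (k a). smult ((-1) ^ (card (k a) - card J)) (gen J)) m
          = (\<Prod>a\<in>A. W (m a) (k a))" if kR: "k \<in> Rprime A I" for k
    proof -
      have "(\<Sum>J\<in>Pow (k a). (-1::int) ^ (card (k a) - card J) * gen J (m a)) = W (m a) (k a)" if "a \<in> A" for a
      proof -
        have "finite (Pow (k a))" using kR that fI unfolding Rprime_def Ptimes_def
          by (auto intro: finite_subset)
        then show ?thesis by (simp add: gen_def W_def dsum)
      qed
      then show ?thesis
        using True by (simp add: tensor_def sum_app smult_def)
    qed
    have RHS1: "(\<Sum>k\<in>Rprime A I. tensor A I (\<lambda>a. \<Sum>J\<in>Pow (k a). smult ((-1) ^ (card (k a) - card J)) (gen J))) m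
        = (\<Sum>k\<in>Rprime A I. \<Prod>a\<in>A. W (m a) (k a))"
      unfolding sum_app[where y=m] by (rule sum.cong[OF refl Tk])
    define Q where "Q S = {K\<in>Pt. K \<inter> S = {}}" for S :: "'i set"
    define F where "F k = (\<Prod>a\<in>A. W (m a) (k a))" for k :: "'a \<Rightarrow> 'i set"
    have fPi: "finite (A \<rightarrow>\<^sub>E Pt)" using fA fPt by (simp add: finite_PiE)
    have subI: "k \<in> A \<rightarrow>\<^sub>E Pt \<Longrightarrow> a \<in> A \<Longrightarrow> k a \<subseteq> I" for k a
      unfolding Pt_def Ptimes_def by auto
    have "(\<Sum>k\<in>Rprime A I. F k) = (\<Sum>k\<in>{k\<in>A \<rightarrow>\<^sub>E Pt. (\<Union>a\<in>A. k a) = I}. F k)"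
      unfolding Rprime_def Pt_def by simp
    also have "\<dots> = (\<Sum>k\<in>A \<rightarrow>\<^sub>E Pt. (if (\<Union>a\<in>A. k a) = I then 1 else 0) * F k)"
      using fPi by (subst sum.inter_filter) (auto intro: sum.cong)
    also have "\<dots> = (\<Sum>k\<in>A \<rightarrow>\<^sub>E Pt. \<Sum>S\<in>Pow I. (-1)^card S * ((if \<forall>a\<in>A. k a \<inter> S = {} then 1 else 0) * F k))"
      by (intro sum.cong refl, subst cover_ind[OF fI subI]) (auto simp: sum_distrib_right mult.assoc)
    also have "\<dots> = (\<Sum>S\<in>Pow I. (-1)^card S * (\<Sum>k\<in>A \<rightarrow>\<^sub>E Pt. (if \<forall>a\<in>A. k a \<inter> S = {} then 1 else 0) * F k))"
      by (subst sum.swap) (simp add: sum_distrib_left)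
    also have "\<dots> = (\<Sum>S\<in>Pow I. (-1)^card S * (\<Prod>a\<in>A. \<Sum>K\<in>Q S. W (m a) K))"
    proof (intro sum.cong refl arg_cong2[where f="(*)"])
      fix S assume "S \<in> Pow I"
      have "(\<Sum>k\<in>A \<rightarrow>\<^sub>E Pt. (if \<forall>a\<in>A. k a \<inter> S = {} then 1 else 0) * F k)
          = (\<Sum>k\<in>{k\<in>A \<rightarrow>\<^sub>E Pt. \<forall>a\<in>A. k a \<inter> S = {}}. F k)"
        using fPi by (subst sum.inter_filter) (auto intro: sum.cong)
      also have "{k\<in>A \<rightarrow>\<^sub>E Pt. \<forall>a\<in>A. k a \<inter> S = {}} = A \<rightarrow>\<^sub>E Q S"
        unfolding Q_def by (auto simp: PiE_def extensional_def)
      also have "(\<Sum>k\<in>A \<rightarrow>\<^sub>E Q S. F k) = (\<Prod>a\<in>A. \<Sum>K\<in>Q S. W (m a) K)"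
        unfolding F_def using fA fPt by (intro prod_sum_PiE[symmetric]) (auto simp: Q_def)
      finally show "(\<Sum>k\<in>A \<rightarrow>\<^sub>E Pt. (if \<forall>a\<in>A. k a \<inter> S = {} then 1 else 0) * F k)
          = (\<Prod>a\<in>A. \<Sum>K\<in>Q S. W (m a) K)" .
    qed
    finally have RHS2: "(\<Sum>k\<in>Rprime A I. F k) = (\<Sum>S\<in>Pow I. (-1)^card S * (\<Prod>a\<in>A. \<Sum>K\<in>Q S. W (m a) K))" .
    have T0: "(\<Sum>K\<in>Q {}. W (m a) K) = c (m a)" if aA: "a \<in> A" for a
    proof -
      have QP: "Q {} = Pow I - {I}" unfolding Q_def Pt_def Ptimes_def by auto
      have "(\<Sum>K\<in>Pow I. W (m a) K) = 0" using alt_int[OF fI, of "m a"] mI[OF aA]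
        unfolding W_def by auto
      moreover have "(\<Sum>K\<in>Pow I. W (m a) K) = W (m a) I + (\<Sum>K\<in>Pow I - {I}. W (m a) K)"
        using fI by (intro sum.remove) auto
      moreover have "card (m a) < card I" using mI[OF aA] fI by (rule psubset_card_mono[rotated])
      then have "card I - card (m a) = Suc (card I - 1 - card (m a))" by simp
      then have "W (m a) I = - c (m a)" using mI[OF aA] unfolding W_def c_def by auto
      ultimately show ?thesis using QP by simp
    qed
    have TS: "(\<Sum>K\<in>Q S. W (m a) K) = (if m a = I - S then 1 else 0)"
      if S: "S \<in> Pow I - {{}}" for a S
    proof -
      have "Q S = Pow (I - S)" using S unfolding Q_def Pt_def Ptimes_def by auto
      then show ?thesis using alt_int[of "I - S" "m a"] fI unfolding W_def by simp
    qed
    have "(\<Sum>S\<in>Pow I. (-1)^card S * (\<Prod>a\<in>A. \<Sum>K\<in>Q S. W (m a) K))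
        = (-1)^card ({}::'i set) * (\<Prod>a\<in>A. \<Sum>K\<in>Q {}. W (m a) K)
          + (\<Sum>S\<in>Pow I - {{}}. (-1)^card S * (\<Prod>a\<in>A. \<Sum>K\<in>Q S. W (m a) K))"
      using fI by (intro sum.remove) auto
    also have "(\<Prod>a\<in>A. \<Sum>K\<in>Q {}. W (m a) K) = (\<Prod>a\<in>A. c (m a))"
      using T0 by (rule prod.cong[OF refl])
    also have "(\<Sum>S\<in>Pow I - {{}}. (-1)^card S * (\<Prod>a\<in>A. \<Sum>K\<in>Q S. W (m a) K))
        = (\<Sum>S\<in>Pow I - {{}}. (-1)^card S * (if \<forall>a\<in>A. m a = I - S then 1 else 0))"
    proof (rule sum.cong[OF refl])
      fix S assume S: "S \<in> Pow I - {{}}"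
      have "(\<Prod>a\<in>A. \<Sum>K\<in>Q S. W (m a) K) = (\<Prod>a\<in>A. if m a = I - S then 1 else 0)"
        using TS[OF S] by simp
      also have "\<dots> = (if \<forall>a\<in>A. m a = I - S then 1 else 0)" using fA by (rule prod_ind)
      finally show "(-1)^card S * (\<Prod>a\<in>A. \<Sum>K\<in>Q S. W (m a) K)
          = (-1)^card S * (if \<forall>a\<in>A. m a = I - S then 1 else 0)" by simp
    qed
    also have "(\<Sum>S\<in>Pow I - {{}}. (-1::int)^card S * (if \<forall>a\<in>A. m a = I - S then 1 else 0))
        = (\<Sum>J\<in>Pt. - (c J * (if \<forall>a\<in>A. m a = J then 1 else 0)))"
    proof (rule sum.reindex_bij_witness[of _ "\<lambda>J. I - J" "\<lambda>S. I - S"])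
      fix S assume S: "S \<in> Pow I - {{}}"
      then show "I - (I - S) = S" by auto
      show "I - S \<in> Pt" using S unfolding Pt_def Ptimes_def by auto
      have fS: "finite S" using S fI by (auto intro: finite_subset)
      have cS: "card S \<ge> 1" using S fS by (auto simp: Suc_le_eq card_gt_0_iff)
      have "card (I - S) = card I - card S" using S fI by (intro card_Diff_subset) (auto intro: finite_subset)
      moreover have "card S \<le> card I" using S fI by (intro card_mono) auto
      ultimately have "card I - 1 - card (I - S) = card S - 1" using cS by simp
      then have "c (I - S) = (-1)^(card S - 1)" unfolding c_def by simp
      moreover have "(-1::int)^card S = - ((-1)^(card S - 1))"
        using cS by (cases "card S") auto
      ultimately show "- (c (I - S) * (if \<forall>a\<in>A. m a = I - S then 1 else 0))
          = (-1)^card S * (if \<forall>a\<in>A. m a = I - S then 1 else 0)" by simp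
    next
      fix J assume J: "J \<in> Pt"
      then show "I - (I - J) = J" unfolding Pt_def Ptimes_def by auto
      show "I - J \<in> Pow I - {{}}" using J unfolding Pt_def Ptimes_def by auto
    qed
    finally have RHS3: "(\<Sum>S\<in>Pow I. (-1)^card S * (\<Prod>a\<in>A. \<Sum>K\<in>Q S. W (m a) K))
        = (\<Prod>a\<in>A. c (m a)) - (\<Sum>J\<in>Pt. c J * (if \<forall>a\<in>A. m a = J then 1 else 0))"
      by (simp add: sum_negf)
    show ?thesis using LHS RHS1 RHS2 RHS3 unfolding F_def by simp
  qed
qed

end
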